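(* Let $(A,*,\{\cdot,\cdot,\cdot\};\omega)$ be a quadratic pre-Lie-Yamaguti algebra. Then $\omega(\{x,y,z\}_D,w)=-\omega(z,[\![x,y,w]\!]_C)$ for all $x,y,z,w\in A$.
   Context: All vector spaces are over a field of characteristic $0$. A pre-Lie-Yamaguti algebra is a vector space $A$ with a bilinear operation $*$ and a trilinear operation $\{\cdot,\cdot,\cdot\}$ such that, writing $[x,y]_C=x*y-y*x$, $(x,y,z)=(x*y)*z-x*(y*z)$ and $\{x,y,z\}_D=\{z,y,x\}-\{z,x,y\}+(y,x,z)-(x,y,z)$, for all $x,y,z,w,t\in A$: (P1) $\{z,[x,y]_C,w\}-\{y*z,x,w\}+\{x*z,y,w\}=0$; (P2) $\{x,y,[z,w]_C\}=z*\{x,y,w\}-w*\{x,y,z\}$; (P3) $\{\{x,y,z\},w,t\}-\{\{x,y,w\},z,t\}-\{x,y,\{z,w,t\}_D\}-\{x,y,\{z,w,t\}\}+\{x,y,\{w,z,t\}\}+\{z,w,\{x,y,t\}\}_D=0$; (P4) $\{z,\{x,y,w\}_D,t\}+\{z,\{x,y,w\},t\}-\{z,\{y,x,w\},t\}+\{z,w,\{x,y,t\}_D\}+\{z,w,\{x,y,t\}\}-\{z,w,\{y,x,t\}\}=\{x,y,\{z,w,t\}\}_D-\{\{x,y,z\}_D,w,t\}$; (P5) $\{x,y,z\}_D*w+\{x,y,z\}*w-\{y,x,z\}*w=\{x,y,z*w\}_D-z*\{x,y,w\}_D$. Set $[\![x,y,z]\!]_C=\{x,y,z\}_D+\{x,y,z\}-\{y,x,z\}$.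 A quadratic pre-Lie-Yamaguti algebra is a pre-Lie-Yamaguti algebra with a nondegenerate skew-symmetric bilinear form $\omega$ such that $\omega(x*y,z)=-\omega(y,[x,z]_C)$ and $\omega(\{x,y,z\},w)=\omega(x,[\![w,z,y]\!]_C)$ for all $x,y,z,w\in A$. *)

theory Defs
  imports Main "HOL.Vector_Spaces"
begin

definition bilin :: "('k::field \<Rightarrow> 'v::ab_group_add \<Rightarrow> 'v) \<Rightarrow> ('k \<Rightarrow> 'w::ab_group_add \<Rightarrow> 'w)
   \<Rightarrow> ('v \<Rightarrow> 'v \<Rightarrow> 'w) \<Rightarrow> bool" where
  "bilin sc sc' f \<longleftrightarrow> (\<forall>x. Vector_Spaces.linear sc sc' (f x))
                     \<and> (\<forall>y. Vector_Spaces.linear sc sc' (\<lambda>x. f x y))"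

definition trilin :: "('k::field \<Rightarrow> 'v::ab_group_add \<Rightarrow> 'v)
   \<Rightarrow> ('v \<Rightarrow> 'v \<Rightarrow> 'v \<Rightarrow> 'v) \<Rightarrow> bool" where
  "trilin sc f \<longleftrightarrow> (\<forall>y z. Vector_Spaces.linear sc sc (\<lambda>x. f x y z))
                  \<and> (\<forall>x z. Vector_Spaces.linear sc sc (\<lambda>y. f x y z))
                  \<and> (\<forall>x y. Vector_Spaces.linear sc sc (\<lambda>z. f x y z))"

definition commC :: "('v::ab_group_add \<Rightarrow> 'v \<Rightarrow> 'v) \<Rightarrow> 'v \<Rightarrow> 'v \<Rightarrow> 'v" where
  "commC m x y = m x y - m y x"

definition assoc :: "('v::ab_group_add \<Rightarrow> 'v \<Rightarrow> 'v) \<Rightarrow> 'v \<Rightarrow> 'v \<Rightarrow> 'v \<Rightarrow> 'v" where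
  "assoc m x y z = m (m x y) z - m x (m y z)"

definition triD :: "('v::ab_group_add \<Rightarrow> 'v \<Rightarrow> 'v) \<Rightarrow> ('v \<Rightarrow> 'v \<Rightarrow> 'v \<Rightarrow> 'v)
   \<Rightarrow> 'v \<Rightarrow> 'v \<Rightarrow> 'v \<Rightarrow> 'v" where
  "triD m t x y z = t z y x - t z x y + assoc m y x z - assoc m x y z"

definition triC :: "('v::ab_group_add \<Rightarrow> 'v \<Rightarrow> 'v) \<Rightarrow> ('v \<Rightarrow> 'v \<Rightarrow> 'v \<Rightarrow> 'v)
   \<Rightarrow> 'v \<Rightarrow> 'v \<Rightarrow> 'v \<Rightarrow> 'v" where
  "triC m t x y z = triD m t x y z + t x y z - t y x z"

definition pre_LY :: "('k::field_char_0 \<Rightarrow> 'v::ab_group_add \<Rightarrow> 'v)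
   \<Rightarrow> ('v \<Rightarrow> 'v \<Rightarrow> 'v) \<Rightarrow> ('v \<Rightarrow> 'v \<Rightarrow> 'v \<Rightarrow> 'v) \<Rightarrow> bool" where
  "pre_LY sc m t \<longleftrightarrow> vector_space sc \<and> bilin sc sc m \<and> trilin sc t \<and>
    (\<forall>x y z w t'.
      \<comment> \<open>P1\<close>
      t z (commC m x y) w - t (m y z) x w + t (m x z) y w = 0 \<and>
      \<comment> \<open>P2\<close>
      t x y (commC m z w) = m z (t x y w) - m w (t x y z) \<and>
      \<comment> \<open>P3\<close>
      t (t x y z) w t' - t (t x y w) z t' - t x y (triD m t z w t') - t x y (t z w t')
        + t x y (t w z t') + triD m t z w (t x y t') = 0 \<and>
      \<comment> \<open>P4\<close>
      t z (triD m t x y w) t' + t z (t x y w) t' - t z (t y x w) t'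
        + t z w (triD m t x y t') + t z w (t x y t') - t z w (t y x t')
        = triD m t x y (t z w t') - t (triD m t x y z) w t' \<and>
      \<comment> \<open>P5\<close>
      m (triD m t x y z) w + m (t x y z) w - m (t y x z) w
        = triD m t x y (m z w) - m z (triD m t x y w))"

definition quadratic_pre_LY :: "('k::field_char_0 \<Rightarrow> 'v::ab_group_add \<Rightarrow> 'v)
   \<Rightarrow> ('v \<Rightarrow> 'v \<Rightarrow> 'v) \<Rightarrow> ('v \<Rightarrow> 'v \<Rightarrow> 'v \<Rightarrow> 'v) \<Rightarrow> ('v \<Rightarrow> 'v \<Rightarrow> 'k) \<Rightarrow> bool" where
  "quadratic_pre_LY sc m t \<omega> \<longleftrightarrow> pre_LY sc m t \<and>
    bilin sc (*) \<omega> \<and>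
    (\<forall>x y. \<omega> x y = - \<omega> y x) \<and>
    (\<forall>x. (\<forall>y. \<omega> x y = 0) \<longrightarrow> x = 0) \<and>
    (\<forall>x y z. \<omega> (m x y) z = - \<omega> y (commC m x z)) \<and>
    (\<forall>x y z w. \<omega> (t x y z) w = \<omega> x (triC m t w z y))"

end

theory Submission
  imports Defs
begin

lemma lin_add: "Vector_Spaces.linear s1 s2 f \<Longrightarrow> f (a + b) = f a + f b"
  by (rule linear.axioms(3)[THEN module_hom.add])
lemma lin_diff: "Vector_Spaces.linear s1 s2 f \<Longrightarrow> f (a - b) = f a - f b"
  by (rule linear.axioms(3)[THEN module_hom.diff])
lemma lin_neg: "Vector_Spaces.linear s1 s2 f \<Longrightarrow> f (- a) = - f a"
  by (rule linear.axioms(3)[THEN module_hom.neg])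

theorem lemma4p11:
  fixes sc :: "'k::field_char_0 \<Rightarrow> 'v::ab_group_add \<Rightarrow> 'v"
    and m :: "'v \<Rightarrow> 'v \<Rightarrow> 'v" and t :: "'v \<Rightarrow> 'v \<Rightarrow> 'v \<Rightarrow> 'v"
    and \<omega> :: "'v \<Rightarrow> 'v \<Rightarrow> 'k"
  assumes "quadratic_pre_LY sc m t \<omega>"
  shows "\<forall>x y z w. \<omega> (triD m t x y z) w = - \<omega> z (triC m t x y w)"
proof (intro allI)
  fix x y z w
  have bl: "bilin sc (*) \<omega>" and inv: "\<And>a b c. \<omega> (m a b) c = - \<omega> b (commC m a c)"
    and tinv: "\<And>a b c d. \<omega> (t a b c) d = \<omega> a (triC m t d c b)"
    using assms unfolding quadratic_pre_LY_def by blast+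
  have l1: "\<And>c. Vector_Spaces.linear sc (*) (\<lambda>x. \<omega> x c)" and l2: "\<And>c. Vector_Spaces.linear sc (*) (\<omega> c)"
    using bl unfolding bilin_def by auto
  have L1: "\<And>a b c. \<omega> (a + b) c = \<omega> a c + \<omega> b c" "\<And>a b c. \<omega> (a - b) c = \<omega> a c - \<omega> b c"
    using lin_add[OF l1] lin_diff[OF l1] by auto
  have L2: "\<And>a b c. \<omega> c (a + b) = \<omega> c a + \<omega> c b" "\<And>a b c. \<omega> c (a - b) = \<omega> c a - \<omega> c b"
     "\<And>a c. \<omega> c (- a) = - \<omega> c a"
    using lin_add[OF l2] lin_diff[OF l2] lin_neg[OF l2] by auto
  have bm: "bilin sc sc m" using assms unfolding quadratic_pre_LY_def pre_LY_def by blast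
  have M: "\<And>a b c. m a (b - c) = m a b - m a c" "\<And>a b c. m (b - c) a = m b a - m c a"
    using bm unfolding bilin_def by (auto intro: lin_diff[where f="\<lambda>x. m x _"] lin_diff[where f="m _"])
  have E: "\<And>a b c. \<omega> (assoc m a b c) w = \<omega> c (- commC m (m a b) w - commC m b (commC m a w))"
    unfolding assoc_def by (simp add: L1 L2 inv)
  have "\<omega> (triD m t x y z) w = \<omega> z (triC m t w x y - triC m t w y x
      + (- commC m (m y x) w - commC m x (commC m y w)) - (- commC m (m x y) w - commC m y (commC m x w)))"
    unfolding triD_def L1 E tinv L2 ..
  also have "triC m t w x y - triC m t w y x
      + (- commC m (m y x) w - commC m x (commC m y w)) - (- commC m (m x y) w - commC m y (commC m x w))
      = - triC m t x y w"
    unfolding triC_def triD_def assoc_def commC_def by (simp add: M algebra_simps)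
  finally show "\<omega> (triD m t x y z) w = - \<omega> z (triC m t x y w)" by (simp add: L2)
qed

end
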